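(* Under the standing assumptions below, every point $u\in\mathcal P_1$ is both an R-limit and an L-limit of $\mathcal P_1$.
   Context: Fix $\rho_1,\rho_2,\rho_3\in(0,1)$ with $\rho_1+\rho_2+\rho_3>1$ and $\rho_i+\rho_j\le1$ for all $i\ne j$; $\mu_i=1$, $\theta:=\rho_1+\rho_2+\rho_3-1$. $A_i^0:=\{y\in\mathbb R^3: y_1+y_2+y_3=1, y_i=0, y_l\ge0\}$, $A^0:=\bigcup_iA_i^0$; for $z\in A^0\setminus A_j^0$, $f_j(z):=\sum_{i\neq j}\frac{(1-\rho_j)z_i+\rho_i z_j}{(1-\rho_j)+\theta z_j}e_i$. For $(\hat i,\hat j,\hat k)$ equal to $(1,2,3)$ or a cyclic permutation, $(1-x)e_{\hat j}+xe_{\hat k}\in A^0_{\hat i}$ is written $(x,\hat i)$, $\pi((x,\hat i)):=x$. Decision points $d_1,d_2,d_3\in(0,1)$ (identified with $(d_{\hat i},\hat i)$); switching rule $\mathfrak R((x,\hat i))=\hat j$ if $x<d_{\hat i}$, $\hat k$ if $x>d_{\hat i}$, both allowed if $x=d_{\hat i}$; $\varphi(z):=f_{\mathfrak R(z)}(z)$. A trajectory is $(z(t))$ with $z(t+1)\in\varphi(z(t))$; $z$ is a pre-image of $z'$ if some trajectory from $z$ has $z(t)=z'$ for some $t\ge1$. Standing assumption: $d_1$ has infinitely many distinct pre-images, while $d_2$ and $d_3$ have only finitely many. $\mathcal P_1$ is the set consisting of $d_1$ and all its pre-images. A point $u\in A^0_{\hat i}$ is an R-limit (resp. L-limit) of $\mathcal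 P_1$ if there is a sequence $u_n\in\mathcal P_1\cap A^0_{\hat i}$ with $\pi(u_n)$ strictly decreasing (resp. strictly increasing) to $\pi(u)$. *)

theory Defs
  imports Complex_Main
begin

text \<open>Points of R^3 are encoded as functions nat => real whose support lies in {1,2,3};
  coordinate l of y is y l.  Parameters rho_i and decision points d_i are nat => real,
  used only at indices 1,2,3.\<close>

definition idx :: "nat set" where "idx = {1,2,3}"

definition evec :: "nat \<Rightarrow> nat \<Rightarrow> real" where
  "evec i = (\<lambda>l. if l = i then 1 else 0)"

definition Aface :: "nat \<Rightarrow> (nat \<Rightarrow> real) set" where
  "Aface i = {y. y 1 + y 2 + y 3 = 1 \<and> y i = 0 \<and> (\<forall>l\<in>idx. y l \<ge> 0) \<and> (\<forall>l. l \<notin> idx \<longrightarrow> y l = 0)}"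

definition A0 :: "(nat \<Rightarrow> real) set" where
  "A0 = (\<Union>i\<in>idx. Aface i)"

definition theta :: "(nat \<Rightarrow> real) \<Rightarrow> real" where
  "theta rho = rho 1 + rho 2 + rho 3 - 1"

text \<open>f_j(z) (meaningful for z in A0 minus A_j^0)\<close>
definition fmap :: "(nat \<Rightarrow> real) \<Rightarrow> nat \<Rightarrow> (nat \<Rightarrow> real) \<Rightarrow> (nat \<Rightarrow> real)" where
  "fmap rho j z = (\<lambda>i. if i \<in> idx \<and> i \<noteq> j then
       ((1 - rho j) * z i + rho i * z j) / ((1 - rho j) + theta rho * z j) else 0)"

text \<open>cyclic successor on {1,2,3}: for hat i, hat j = nxt hat i, hat k = nxt (nxt hat i)\<close>
definition nxt :: "nat \<Rightarrow> nat" where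
  "nxt i = (if i = 3 then 1 else i + 1)"

definition pt :: "real \<Rightarrow> nat \<Rightarrow> (nat \<Rightarrow> real)" where
  "pt x i = (\<lambda>l. (1 - x) * evec (nxt i) l + x * evec (nxt (nxt i)) l)"

definition piF :: "nat \<Rightarrow> (nat \<Rightarrow> real) \<Rightarrow> real" where
  "piF i z = z (nxt (nxt i))"

definition allowed :: "(nat \<Rightarrow> real) \<Rightarrow> (nat \<Rightarrow> real) \<Rightarrow> nat \<Rightarrow> bool" where
  "allowed d z j \<longleftrightarrow> (\<exists>i\<in>idx. z \<in> Aface i \<and>
      ((piF i z \<le> d i \<and> j = nxt i) \<or> (piF i z \<ge> d i \<and> j = nxt (nxt i))))"

definition phi :: "(nat \<Rightarrow> real) \<Rightarrow> (nat \<Rightarrow> real) \<Rightarrow> (nat \<Rightarrow> real) \<Rightarrow> (nat \<Rightarrow> real) set" where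
  "phi rho d z = {fmap rho j z | j. allowed d z j}"

definition trajectory :: "(nat \<Rightarrow> real) \<Rightarrow> (nat \<Rightarrow> real) \<Rightarrow> (nat \<Rightarrow> (nat \<Rightarrow> real)) \<Rightarrow> bool" where
  "trajectory rho d s \<longleftrightarrow> (\<forall>t. s (Suc t) \<in> phi rho d (s t))"

definition preimage :: "(nat \<Rightarrow> real) \<Rightarrow> (nat \<Rightarrow> real) \<Rightarrow> (nat \<Rightarrow> real) \<Rightarrow> (nat \<Rightarrow> real) \<Rightarrow> bool" where
  "preimage rho d z z' \<longleftrightarrow> (\<exists>s. trajectory rho d s \<and> s 0 = z \<and> (\<exists>t\<ge>1. s t = z'))"

definition dpt :: "(nat \<Rightarrow> real) \<Rightarrow> nat \<Rightarrow> (nat \<Rightarrow> real)" where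
  "dpt d i = pt (d i) i"

definition P1 :: "(nat \<Rightarrow> real) \<Rightarrow> (nat \<Rightarrow> real) \<Rightarrow> (nat \<Rightarrow> real) set" where
  "P1 rho d = insert (dpt d 1) {z. preimage rho d z (dpt d 1)}"

definition R_limit :: "(nat \<Rightarrow> real) set \<Rightarrow> nat \<Rightarrow> (nat \<Rightarrow> real) \<Rightarrow> bool" where
  "R_limit P i u \<longleftrightarrow> u \<in> Aface i \<and> (\<exists>un. (\<forall>n. un n \<in> P \<inter> Aface i) \<and>
      (\<forall>n. piF i (un (Suc n)) < piF i (un n)) \<and> (\<lambda>n. piF i (un n)) \<longlonglongrightarrow> piF i u)"

definition L_limit :: "(nat \<Rightarrow> real) set \<Rightarrow> nat \<Rightarrow> (nat \<Rightarrow> real) \<Rightarrow> bool" where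
  "L_limit P i u \<longleftrightarrow> u \<in> Aface i \<and> (\<exists>un. (\<forall>n. un n \<in> P \<inter> Aface i) \<and>
      (\<forall>n. piF i (un (Suc n)) > piF i (un n)) \<and> (\<lambda>n. piF i (un n)) \<longlonglongrightarrow> piF i u)"

end

theory Submission
  imports Defs
begin

lemma idx_cases: "i \<in> idx \<Longrightarrow> i = 1 \<or> i = 2 \<or> i = 3" by (auto simp: idx_def)
lemma nxt_vals[simp]: "nxt 1 = 2" "nxt (Suc 0) = 2" "nxt 2 = 3" "nxt 3 = 1" by (auto simp: nxt_def)
lemma idx_vals[simp]: "1 \<in> idx" "Suc 0 \<in> idx" "2 \<in> idx" "3 \<in> idx" by (auto simp: idx_def)
lemma nxt_idx[simp]: "i \<in> idx \<Longrightarrow> nxt i \<in> idx" by (auto simp: idx_def nxt_def)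
lemma nxt3[simp]: "i \<in> idx \<Longrightarrow> nxt (nxt (nxt i)) = i" by (auto simp: idx_def nxt_def)
lemma nxt_ne1[simp]: "i \<in> idx \<Longrightarrow> nxt i \<noteq> i" by (auto simp: idx_def nxt_def)
lemma nxt_ne2[simp]: "i \<in> idx \<Longrightarrow> nxt (nxt i) \<noteq> i" by (auto simp: idx_def nxt_def)
lemma nxt_ne3[simp]: "i \<in> idx \<Longrightarrow> nxt (nxt i) \<noteq> nxt i" by (auto simp: idx_def nxt_def)
lemma nxt_ne1'[simp]: "i \<in> idx \<Longrightarrow> i \<noteq> nxt i" by (auto simp: idx_def nxt_def)
lemma nxt_ne2'[simp]: "i \<in> idx \<Longrightarrow> i \<noteq> nxt (nxt i)" by (auto simp: idx_def nxt_def)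
lemma nxt_ne3'[simp]: "i \<in> idx \<Longrightarrow> nxt i \<noteq> nxt (nxt i)" by (auto simp: idx_def nxt_def)
lemma nxt_inj: "i \<in> idx \<Longrightarrow> j \<in> idx \<Longrightarrow> nxt i = nxt j \<Longrightarrow> i = j" by (auto simp: idx_def nxt_def)
lemma idx_eq: "i \<in> idx \<Longrightarrow> idx = {i, nxt i, nxt (nxt i)}" by (auto simp: idx_def nxt_def)
lemma idx_mem: "i \<in> idx \<Longrightarrow> l \<in> idx \<Longrightarrow> l = i \<or> l = nxt i \<or> l = nxt (nxt i)"
  using idx_eq by blast

lemma pt_i[simp]: "i \<in> idx \<Longrightarrow> pt x i i = 0" using idx_cases[of i] by (auto simp: pt_def evec_def)
lemma pt_j[simp]: "i \<in> idx \<Longrightarrow> pt x i (nxt i) = 1 - x" using idx_cases[of i] by (auto simp: pt_def evec_def)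
lemma pt_k[simp]: "i \<in> idx \<Longrightarrow> pt x i (nxt (nxt i)) = x" using idx_cases[of i] by (auto simp: pt_def evec_def)
lemma pt_out[simp]: "i \<in> idx \<Longrightarrow> l \<notin> idx \<Longrightarrow> pt x i l = 0"
  by (auto simp: pt_def evec_def)

lemma pt_k2[simp]: "i \<in> idx \<Longrightarrow> pt x (nxt i) i = x"
  using pt_k[of "nxt i" x] by simp
lemma pt_j2[simp]: "i \<in> idx \<Longrightarrow> pt x (nxt (nxt i)) i = 1 - x"
  using pt_j[of "nxt (nxt i)" x] by simp
lemma pt_k3[simp]: "i \<in> idx \<Longrightarrow> pt x (nxt (nxt i)) (nxt i) = x"
  using pt_k[of "nxt (nxt i)" x] by simp
lemma pt_i2[simp]: "i \<in> idx \<Longrightarrow> pt x (nxt i) (nxt i) = 0" by simp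
lemma pt_i3[simp]: "i \<in> idx \<Longrightarrow> pt x (nxt (nxt i)) (nxt (nxt i)) = 0" by simp
lemma pt_j4[simp]: "i \<in> idx \<Longrightarrow> pt x (nxt i) (nxt (nxt i)) = 1 - x" by simp
lemma sum3: "i \<in> idx \<Longrightarrow> (y::nat\<Rightarrow>real) i + y (nxt i) + y (nxt (nxt i)) = y 1 + y 2 + y 3"
  using idx_cases[of i] by auto

lemma pt_ext: assumes "i \<in> idx" "\<forall>l. l \<notin> idx \<longrightarrow> y l = 0" "\<forall>l. l \<notin> idx \<longrightarrow> z l = 0"
  "y i = z i" "y (nxt i) = z (nxt i)" "y (nxt (nxt i)) = z (nxt (nxt i))"
  shows "y = z"
proof
  fix l show "y l = z l" using assms idx_mem[of i l] by (cases "l \<in> idx") auto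
qed

lemma pt_Aface: "i \<in> idx \<Longrightarrow> 0 \<le> x \<Longrightarrow> x \<le> 1 \<Longrightarrow> pt x i \<in> Aface i"
proof -
  assume a: "i \<in> idx" "0 \<le> x" "x \<le> 1"
  have "pt x i 1 + pt x i 2 + pt x i 3 = 1" using sum3[OF a(1), of "pt x i"] a by simp
  moreover have "\<forall>l\<in>idx. pt x i l \<ge> 0" using a idx_mem[of i] by fastforce
  ultimately show ?thesis using a by (auto simp: Aface_def)
qed

lemma piF_pt[simp]: "i \<in> idx \<Longrightarrow> piF i (pt x i) = x" by (simp add: piF_def)

lemma Aface_pt: assumes "i \<in> idx" "z \<in> Aface i"
  shows "z = pt (piF i z) i" "0 \<le> piF i z" "piF i z \<le> 1"
proof -
  have s: "z i + z (nxt i) + z (nxt (nxt i)) = 1" using assms sum3[OF assms(1), of z] by (simp add: Aface_def)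
  have zi: "z i = 0" using assms by (simp add: Aface_def)
  show "z = pt (piF i z) i"
    apply (rule pt_ext[OF assms(1)])
    using assms s zi by (auto simp: Aface_def piF_def)
  show "0 \<le> piF i z" using assms by (auto simp: Aface_def piF_def)
  have "z (nxt i) \<ge> 0" using assms by (auto simp: Aface_def)
  then show "piF i z \<le> 1" using s zi by (simp add: piF_def)
qed

lemma pt_eq: assumes "i \<in> idx" "f \<in> idx" "0 < x" "x < 1" "pt x f = pt y i"
  shows "i = f" "y = x"
proof -
  show "i = f"
  proof (rule ccontr)
    assume "i \<noteq> f"
    then have "i = nxt f \<or> i = nxt (nxt f)" using idx_mem[of f i] assms by auto
    then have "pt x f i > 0" using assms(2-4) by auto
    moreover have "pt y i i = 0" using assms(1) by simp
    ultimately show False using assms(5) by simp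
  qed
  then show "y = x" using assms by (metis piF_pt)
qed

lemma pt_face: assumes "i \<in> idx" "f \<in> idx" "0 < x" "x < 1" "pt x f \<in> Aface i"
  shows "i = f"
  using Aface_pt(1)[OF assms(1,5)] pt_eq(1)[OF assms(1-4)] by metis

definition gA :: "(nat\<Rightarrow>real) \<Rightarrow> nat \<Rightarrow> real \<Rightarrow> real" where
  "gA rho i x = rho i * (1-x) / ((1 - rho (nxt i)) + theta rho * (1-x))"
definition gB :: "(nat\<Rightarrow>real) \<Rightarrow> nat \<Rightarrow> real \<Rightarrow> real" where
  "gB rho i x = ((1 - rho (nxt (nxt i))) * (1-x) + rho (nxt i) * x) / ((1 - rho (nxt (nxt i))) + theta rho * x)"

locale setting =
  fixes rho d :: "nat \<Rightarrow> real"
  assumes rho_range: "\<forall>i\<in>idx. 0 < rho i \<and> rho i < 1"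
    and rho_sum: "rho 1 + rho 2 + rho 3 > 1"
    and rho_pair: "\<forall>i\<in>idx. \<forall>j\<in>idx. i \<noteq> j \<longrightarrow> rho i + rho j \<le> 1"
    and d_range: "\<forall>i\<in>idx. 0 < d i \<and> d i < 1"
begin

lemma th_pos: "theta rho > 0" using rho_sum by (simp add: theta_def)
lemma th_eq: "i \<in> idx \<Longrightarrow> theta rho = rho i + rho (nxt i) + rho (nxt (nxt i)) - 1"
  using sum3[of i rho] by (simp add: theta_def)
lemma rp: "i \<in> idx \<Longrightarrow> 0 < rho i" "i \<in> idx \<Longrightarrow> rho i < 1" using rho_range by auto
lemma dp: "i \<in> idx \<Longrightarrow> 0 < d i" "i \<in> idx \<Longrightarrow> d i < 1" using d_range by auto
lemma pair1: "i \<in> idx \<Longrightarrow> rho i + rho (nxt i) \<le> 1" using rho_pair[rule_format, of i "nxt i"] by auto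
lemma pair2: "i \<in> idx \<Longrightarrow> rho i + rho (nxt (nxt i)) \<le> 1" using rho_pair[rule_format, of i "nxt (nxt i)"] by auto

lemma fmap_out: "l \<notin> idx \<Longrightarrow> fmap rho j z l = 0" by (simp add: fmap_def)
lemma fmap_j: "fmap rho j z j = 0" by (simp add: fmap_def)

lemma fmapA: assumes i: "i \<in> idx" and x: "0 \<le> x" "x \<le> 1"
  shows "fmap rho (nxt i) (pt x i) = pt (gA rho i x) (nxt i)"
proof -
  let ?D = "(1 - rho (nxt i)) + theta rho * (1-x)"
  have D: "?D > 0" using th_pos rp[of "nxt i"] i x by (simp add: add_pos_nonneg)
  have n3: "nxt (nxt (nxt i)) = i" using i by simp
  have e1: "fmap rho (nxt i) (pt x i) i = gA rho i x"
    using i by (simp add: fmap_def gA_def)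
  have e2: "fmap rho (nxt i) (pt x i) (nxt (nxt i)) = 1 - gA rho i x"
  proof -
    have "fmap rho (nxt i) (pt x i) (nxt (nxt i)) = ((1 - rho (nxt i)) * x + rho (nxt (nxt i)) * (1-x)) / ?D"
      using i by (simp add: fmap_def)
    also have "\<dots> = (?D - rho i * (1-x)) / ?D"
    proof -
      have "(1 - rho (nxt i)) * x + rho (nxt (nxt i)) * (1-x) = ?D - rho i * (1-x)"
        unfolding th_eq[OF i] by (simp add: algebra_simps)
      then show ?thesis by simp
    qed
    also have "\<dots> = 1 - gA rho i x" using D unfolding gA_def by (simp add: diff_divide_distrib)

    finally show ?thesis .
  qed
  show ?thesis
    apply (rule pt_ext[of "nxt i"])
    using i e1 e2 n3 by (auto simp: fmap_out fmap_j)
qed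

lemma fmapB: assumes i: "i \<in> idx" and x: "0 \<le> x" "x \<le> 1"
  shows "fmap rho (nxt (nxt i)) (pt x i) = pt (gB rho i x) (nxt (nxt i))"
proof -
  let ?D = "(1 - rho (nxt (nxt i))) + theta rho * x"
  have D: "?D > 0" using th_pos rp[of "nxt (nxt i)"] i x by (simp add: add_pos_nonneg)
  have n3: "nxt (nxt (nxt i)) = i" using i by simp
  have e1: "fmap rho (nxt (nxt i)) (pt x i) (nxt i) = gB rho i x"
    using i by (simp add: fmap_def gB_def)
  have e2: "fmap rho (nxt (nxt i)) (pt x i) i = 1 - gB rho i x"
  proof -
    have "fmap rho (nxt (nxt i)) (pt x i) i = (rho i * x) / ?D"
      using i by (simp add: fmap_def)
    also have "\<dots> = (?D - ((1 - rho (nxt (nxt i))) * (1-x) + rho (nxt i) * x)) / ?D"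
    proof -
      have "rho i * x = ?D - ((1 - rho (nxt (nxt i))) * (1-x) + rho (nxt i) * x)"
        unfolding th_eq[OF i] by (simp add: algebra_simps)
      then show ?thesis by simp
    qed
    also have "\<dots> = 1 - gB rho i x" using D unfolding gB_def by (simp add: diff_divide_distrib)

    finally show ?thesis .
  qed
  show ?thesis
    apply (rule pt_ext[of "nxt (nxt i)"])
    using i e1 e2 n3 by (auto simp: fmap_out fmap_j)
qed

end

context setting begin

definition "aA i = 1 - rho (nxt i)"
definition "bB i = 1 - rho (nxt (nxt i))"
definition "cA i = rho i * aA i / (aA i + theta rho * (1 - d i))^2"
definition "cB i = rho i * bB i / (bB i + theta rho * d i)^2"

lemma aA_pos: "i \<in> idx \<Longrightarrow> aA i > 0" using rp[of "nxt i"] by (simp add: aA_def)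
lemma bB_pos: "i \<in> idx \<Longrightarrow> bB i > 0" using rp[of "nxt (nxt i)"] by (simp add: bB_def)
lemma aA_ge: "i \<in> idx \<Longrightarrow> rho i \<le> aA i" using pair1[of i] by (simp add: aA_def)
lemma bB_ge: "i \<in> idx \<Longrightarrow> rho i \<le> bB i" using pair2[of i] by (simp add: bB_def)

lemma gA_alt: "gA rho i x = rho i * (1-x) / (aA i + theta rho * (1-x))" by (simp add: gA_def aA_def)
lemma gB_alt: "gB rho i x = (bB i * (1-x) + rho (nxt i) * x) / (bB i + theta rho * x)" by (simp add: gB_def bB_def)

lemma DA_pos: "i \<in> idx \<Longrightarrow> x \<le> 1 \<Longrightarrow> aA i + theta rho * (1-x) > 0"
  using aA_pos[of i] th_pos by (simp add: add_pos_nonneg)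
lemma DB_pos: "i \<in> idx \<Longrightarrow> 0 \<le> x \<Longrightarrow> bB i + theta rho * x > 0"
  using bB_pos[of i] th_pos by (simp add: add_pos_nonneg)

lemma gA_diff: assumes i: "i \<in> idx" and "x \<le> 1" "y \<le> 1"
  shows "gA rho i x - gA rho i y = rho i * aA i * (y - x) / ((aA i + theta rho * (1-x)) * (aA i + theta rho * (1-y)))"
  using DA_pos[OF i assms(2)] DA_pos[OF i assms(3)]
  by (simp add: gA_alt field_simps)

lemma gB_diff: assumes i: "i \<in> idx" and "0 \<le> x" "0 \<le> y"
  shows "gB rho i x - gB rho i y = rho i * bB i * (y - x) / ((bB i + theta rho * x) * (bB i + theta rho * y))"
proof -
  have k: "theta rho + bB i - rho (nxt i) = rho i" using th_eq[OF i] by (simp add: bB_def)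
  show ?thesis
  using DB_pos[OF i assms(2)] DB_pos[OF i assms(3)] k
  by (simp add: gB_alt field_simps) (simp add: algebra_simps flip: k)
qed

lemma gA_mono: assumes i: "i \<in> idx" "x < y" "y \<le> 1" shows "gA rho i y < gA rho i x"
proof -
  have e: "gA rho i x - gA rho i y = rho i * aA i * (y - x) / ((aA i + theta rho * (1-x)) * (aA i + theta rho * (1-y)))"
    using gA_diff[OF i(1), of x y] assms by simp
  have "gA rho i x - gA rho i y > 0"
    unfolding e using assms DA_pos[OF i(1), of x] DA_pos[OF i(1), of y] aA_pos[OF i(1)] rp[OF i(1)]
    by (intro divide_pos_pos mult_pos_pos) auto
  then show ?thesis by simp
qed

lemma gB_mono: assumes i: "i \<in> idx" "x < y" "0 \<le> x" shows "gB rho i y < gB rho i x"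
proof -
  have e: "gB rho i x - gB rho i y = rho i * bB i * (y - x) / ((bB i + theta rho * x) * (bB i + theta rho * y))"
    using gB_diff[OF i(1), of x y] assms by simp
  have "gB rho i x - gB rho i y > 0"
    unfolding e using assms DB_pos[OF i(1), of x] DB_pos[OF i(1), of y] bB_pos[OF i(1)] rp[OF i(1)]
    by (intro divide_pos_pos mult_pos_pos) auto
  then show ?thesis by simp
qed

lemma gA_range: assumes i: "i \<in> idx" and x: "0 \<le> x" "x < 1" shows "0 < gA rho i x" "gA rho i x < 1"
proof -
  show "0 < gA rho i x" unfolding gA_alt using DA_pos[OF i, of x] rp[OF i] x by simp
  have "rho i * (1-x) < aA i + theta rho * (1-x)"
  proof -
    have "rho i - theta rho = 1 - rho (nxt i) - rho (nxt (nxt i))" using th_eq[OF i] by simp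
    have "(rho i - theta rho) * (1-x) < aA i"
    proof (cases "rho i - theta rho \<le> 0")
      case True
      have "(rho i - theta rho) * (1-x) \<le> 0" using True x by (simp add: mult_nonpos_nonneg)
      then show ?thesis using aA_pos[OF i] by linarith
    next
      case False
      then have "(rho i - theta rho) * (1-x) \<le> rho i - theta rho" using x by (simp add: mult_left_le)
      also have "\<dots> < aA i" using th_eq[OF i] rp[of "nxt (nxt i)"] i by (simp add: aA_def)
      finally show ?thesis .
    qed
    then show ?thesis by (simp add: algebra_simps)
  qed
  then show "gA rho i x < 1" unfolding gA_alt using DA_pos[OF i, of x] x by simp
qed

lemma gB_range: assumes i: "i \<in> idx" and x: "0 < x" "x \<le> 1" shows "0 < gB rho i x" "gB rho i x < 1"
proof -
  have "bB i * (1-x) \<ge> 0" using bB_pos[OF i] x by simp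
  then show "0 < gB rho i x" unfolding gB_alt using DB_pos[OF i, of x] rp[of "nxt i"] i x
    by (simp add: add_nonneg_pos)
  have "bB i * (1-x) + rho (nxt i) * x < bB i + theta rho * x"
  proof -
    have k: "theta rho + bB i - rho (nxt i) = rho i" using th_eq[OF i] by (simp add: bB_def)
    have "bB i + theta rho * x - (bB i * (1-x) + rho (nxt i) * x) = rho i * x"
      by (simp add: algebra_simps flip: k)
    moreover have "rho i * x > 0" using rp[OF i] x by simp
    ultimately show ?thesis by linarith
  qed
  then show "gB rho i x < 1" unfolding gB_alt using DB_pos[OF i, of x] x by simp
qed

lemma meet: "i \<in> idx \<Longrightarrow> gB rho (nxt (nxt i)) 1 = gA rho i 0"
  by (simp add: gA_def gB_def)

lemma cA_props: assumes i: "i \<in> idx" shows "0 < cA i" "cA i < 1"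
proof -
  let ?m = "aA i + theta rho * (1 - d i)"
  have m: "?m > aA i" using th_pos dp[OF i] by simp
  show "0 < cA i" unfolding cA_def using rp[OF i] aA_pos[OF i] m by simp
  have "rho i * aA i \<le> aA i * aA i" using aA_ge[OF i] aA_pos[OF i] by (simp add: mult_right_mono)
  also have "\<dots> < ?m * ?m" using m aA_pos[OF i] by (simp add: mult_strict_mono)
  finally show "cA i < 1" unfolding cA_def using m aA_pos[OF i] by (simp add: power2_eq_square)
qed

lemma cB_props: assumes i: "i \<in> idx" shows "0 < cB i" "cB i < 1"
proof -
  let ?m = "bB i + theta rho * d i"
  have m: "?m > bB i" using th_pos dp[OF i] by simp
  show "0 < cB i" unfolding cB_def using rp[OF i] bB_pos[OF i] m by simp
  have "rho i * bB i \<le> bB i * bB i" using bB_ge[OF i] bB_pos[OF i] by (simp add: mult_right_mono)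
  also have "\<dots> < ?m * ?m" using m bB_pos[OF i] by (simp add: mult_strict_mono)
  finally show "cB i < 1" unfolding cB_def using m bB_pos[OF i] by (simp add: power2_eq_square)
qed

lemma gA_lip: assumes i: "i \<in> idx" and x: "0 \<le> x" "x \<le> d i" and y: "0 \<le> y" "y \<le> d i"
  shows "\<bar>gA rho i x - gA rho i y\<bar> \<le> cA i * \<bar>x - y\<bar>"
proof -
  let ?m = "aA i + theta rho * (1 - d i)"
  let ?Dx = "aA i + theta rho * (1-x)" and ?Dy = "aA i + theta rho * (1-y)"
  have m: "?m > 0" using th_pos dp[OF i] aA_pos[OF i] by (simp add: add_pos_nonneg)
  have dx: "?Dx \<ge> ?m" using x th_pos by simp
  have dy: "?Dy \<ge> ?m" using y th_pos by simp
  have d1: "x \<le> 1" "y \<le> 1" using x y dp[OF i] by auto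
  have "\<bar>gA rho i x - gA rho i y\<bar> = rho i * aA i * \<bar>x - y\<bar> / (?Dx * ?Dy)"
    unfolding gA_diff[OF i d1(1) d1(2)] using DA_pos[OF i d1(1)] DA_pos[OF i d1(2)] rp[OF i] aA_pos[OF i]
    by (simp add: abs_mult abs_minus_commute)
  also have "\<dots> \<le> rho i * aA i * \<bar>x - y\<bar> / (?m * ?m)"
    using m dx dy rp[OF i] aA_pos[OF i] by (intro divide_left_mono mult_mono) auto
  also have "\<dots> = cA i * \<bar>x - y\<bar>" by (simp add: cA_def power2_eq_square)
  finally show ?thesis .
qed

lemma gB_lip: assumes i: "i \<in> idx" and x: "d i \<le> x" "x \<le> 1" and y: "d i \<le> y" "y \<le> 1"
  shows "\<bar>gB rho i x - gB rho i y\<bar> \<le> cB i * \<bar>x - y\<bar>"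
proof -
  let ?m = "bB i + theta rho * d i"
  let ?Dx = "bB i + theta rho * x" and ?Dy = "bB i + theta rho * y"
  have m: "?m > 0" using th_pos dp[OF i] bB_pos[OF i] by (simp add: add_pos_nonneg)
  have dx: "?Dx \<ge> ?m" using x th_pos by simp
  have dy: "?Dy \<ge> ?m" using y th_pos by simp
  have d1: "0 \<le> x" "0 \<le> y" using x y dp[OF i] by auto
  have "\<bar>gB rho i x - gB rho i y\<bar> = rho i * bB i * \<bar>x - y\<bar> / (?Dx * ?Dy)"
    unfolding gB_diff[OF i d1(1) d1(2)] using DB_pos[OF i d1(1)] DB_pos[OF i d1(2)] rp[OF i] bB_pos[OF i]
    by (simp add: abs_mult abs_minus_commute)
  also have "\<dots> \<le> rho i * bB i * \<bar>x - y\<bar> / (?m * ?m)"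
    using m dx dy rp[OF i] bB_pos[OF i] by (intro divide_left_mono mult_mono) auto
  also have "\<dots> = cB i * \<bar>x - y\<bar>" by (simp add: cB_def power2_eq_square)
  finally show ?thesis .
qed

end

context setting begin

lemma step_desc: assumes "y \<in> phi rho d w"
  shows "\<exists>i\<in>idx. \<exists>x. 0 \<le> x \<and> x \<le> 1 \<and> w = pt x i \<and>
     ((x \<le> d i \<and> y = pt (gA rho i x) (nxt i)) \<or> (d i \<le> x \<and> y = pt (gB rho i x) (nxt (nxt i))))"
proof -
  obtain j where y: "y = fmap rho j w" and al: "allowed d w j" using assms unfolding phi_def by blast
  obtain i where i: "i \<in> idx" "w \<in> Aface i" and br: "(piF i w \<le> d i \<and> j = nxt i) \<or> (piF i w \<ge> d i \<and> j = nxt (nxt i))"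
    using al unfolding allowed_def by blast
  define x where "x = piF i w"
  have w: "w = pt x i" and x: "0 \<le> x" "x \<le> 1" using Aface_pt[OF i] unfolding x_def by auto
  have "(x \<le> d i \<and> y = pt (gA rho i x) (nxt i)) \<or> (d i \<le> x \<and> y = pt (gB rho i x) (nxt (nxt i)))"
  proof (cases "piF i w \<le> d i \<and> j = nxt i")
    case True
    then have "y = fmap rho (nxt i) (pt x i)" using y w by simp
    then show ?thesis using fmapA[OF i(1) x] True unfolding x_def by simp
  next
    case False
    then have "piF i w \<ge> d i" "j = nxt (nxt i)" using br by auto
    moreover then have "y = fmap rho (nxt (nxt i)) (pt x i)" using y w by simp
    ultimately show ?thesis using fmapB[OF i(1) x] unfolding x_def by simp
  qed
  then show ?thesis using i(1) x w by blast
qed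


lemma step_img: assumes "y \<in> phi rho d w"
  shows "\<exists>f\<in>idx. \<exists>x. 0 < x \<and> x < 1 \<and> y = pt x f"
proof -
  obtain i x where i: "i \<in> idx" and x: "0 \<le> x" "x \<le> 1" "w = pt x i"
    and br: "(x \<le> d i \<and> y = pt (gA rho i x) (nxt i)) \<or> (d i \<le> x \<and> y = pt (gB rho i x) (nxt (nxt i)))"
    using step_desc[OF assms] by blast
  show ?thesis
  proof (cases "x \<le> d i \<and> y = pt (gA rho i x) (nxt i)")
    case True
    then have "x < 1" using dp[OF i] by linarith
    then have "0 < gA rho i x" "gA rho i x < 1" using gA_range[OF i x(1)] by auto
    then show ?thesis using True nxt_idx[OF i] by blast
  next
    case False
    then have b: "d i \<le> x" "y = pt (gB rho i x) (nxt (nxt i))" using br by auto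
    then have "0 < x" using dp[OF i] by linarith
    then have "0 < gB rho i x" "gB rho i x < 1" using gB_range[OF i _ x(2)] by auto
    then show ?thesis using b nxt_idx[OF nxt_idx[OF i]] by blast
  qed
qed

lemma step_A0: assumes "y \<in> phi rho d w" shows "y \<in> A0"
proof -
  obtain f x where f: "f \<in> idx" "0 < x" "x < 1" "y = pt x f" using step_img[OF assms] by blast
  then have "y \<in> Aface f" using pt_Aface[OF f(1)] by simp
  then show ?thesis using f(1) unfolding A0_def by blast
qed

lemma phi_nonempty: assumes "w \<in> A0" shows "\<exists>y. y \<in> phi rho d w"
proof -
  obtain i where i: "i \<in> idx" "w \<in> Aface i" using assms unfolding A0_def by blast
  have "allowed d w (if piF i w \<le> d i then nxt i else nxt (nxt i))"
    unfolding allowed_def using i by (intro bexI[OF _ i(1)]) simp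
  then show ?thesis unfolding phi_def by blast
qed

lemma phiA: assumes f: "f \<in> idx" and x: "0 < x" "x < d f" and y: "y \<in> phi rho d (pt x f)"
  shows "y = pt (gA rho f x) (nxt f)"
proof -
  have x1: "x < 1" using x dp[OF f] by linarith
  obtain i x' where i: "i \<in> idx" and x': "0 \<le> x'" "x' \<le> 1" "pt x f = pt x' i"
    and br: "(x' \<le> d i \<and> y = pt (gA rho i x') (nxt i)) \<or> (d i \<le> x' \<and> y = pt (gB rho i x') (nxt (nxt i)))"
    using step_desc[OF y] by blast
  have e: "i = f" "x' = x" using pt_eq[OF i f x(1) x1 x'(3)] by auto
  have "\<not> d i \<le> x'" using e x by simp
  then show ?thesis using br e by simp
qed

lemma phiB: assumes f: "f \<in> idx" and x: "d f < x" "x < 1" and y: "y \<in> phi rho d (pt x f)"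
  shows "y = pt (gB rho f x) (nxt (nxt f))"
proof -
  have x1: "0 < x" using x dp[OF f] by linarith
  obtain i x' where i: "i \<in> idx" and x': "0 \<le> x'" "x' \<le> 1" "pt x f = pt x' i"
    and br: "(x' \<le> d i \<and> y = pt (gA rho i x') (nxt i)) \<or> (d i \<le> x' \<and> y = pt (gB rho i x') (nxt (nxt i)))"
    using step_desc[OF y] by blast
  have e: "i = f" "x' = x" using pt_eq[OF i f x1 x(2) x'(3)] by auto
  have "\<not> x' \<le> d i" using e x by simp
  then show ?thesis using br e by simp
qed

lemma gA_inj: "i \<in> idx \<Longrightarrow> x \<le> 1 \<Longrightarrow> y \<le> 1 \<Longrightarrow> gA rho i x = gA rho i y \<Longrightarrow> x = y"
  using gA_mono[of i x y] gA_mono[of i y x] by (cases x y rule: linorder_cases) auto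
lemma gB_inj: "i \<in> idx \<Longrightarrow> 0 \<le> x \<Longrightarrow> 0 \<le> y \<Longrightarrow> gB rho i x = gB rho i y \<Longrightarrow> x = y"
  using gB_mono[of i x y] gB_mono[of i y x] by (cases x y rule: linorder_cases) auto

lemma vert_eq: assumes "i \<in> idx" shows "pt 0 i = pt 1 (nxt (nxt i))"
proof (rule pt_ext[OF assms])
  show "\<forall>l. l \<notin> idx \<longrightarrow> pt 0 i l = 0" using assms by simp
  show "\<forall>l. l \<notin> idx \<longrightarrow> pt 1 (nxt (nxt i)) l = 0" using assms by simp
qed (use assms in simp_all)

lemma AB_meet: assumes i1: "i1 \<in> idx" and i2: "i2 \<in> idx" and x1: "0 \<le> x1" "x1 \<le> d i1" and x2: "d i2 \<le> x2" "x2 \<le> 1"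
  and e: "pt (gA rho i1 x1) (nxt i1) = pt (gB rho i2 x2) (nxt (nxt i2))"
  shows "pt x1 i1 = pt x2 i2"
proof -
  have x1': "x1 < 1" using x1 dp[OF i1] by linarith
  have x2': "0 < x2" using x2 dp[OF i2] by linarith
  have r: "0 < gA rho i1 x1" "gA rho i1 x1 < 1" using gA_range[OF i1 x1(1) x1'] by auto
  have e1: "nxt (nxt i2) = nxt i1" using pt_eq(1)[OF nxt_idx[OF nxt_idx[OF i2]] nxt_idx[OF i1] r e] .
  have g: "gB rho i2 x2 = gA rho i1 x1" using pt_eq(2)[OF nxt_idx[OF nxt_idx[OF i2]] nxt_idx[OF i1] r e] .
  have i2e: "i2 = nxt (nxt i1)"
  proof -
    have "nxt (nxt (nxt i2)) = nxt (nxt i1)" using e1 by simp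
    then show ?thesis using i2 by simp
  qed
  have le1: "gA rho i1 x1 \<le> gA rho i1 0"
  proof (cases "x1 = 0")
    case False then show ?thesis using gA_mono[OF i1, of 0 x1] x1' x1 by simp
  qed simp
  have me: "gA rho i1 0 = gB rho i2 1" using meet[OF i1] i2e by simp
  have le2: "gB rho i2 1 \<le> gB rho i2 x2"
  proof (cases "x2 = 1")
    case False then show ?thesis using gB_mono[OF i2, of x2 1] x2 x2' by simp
  qed simp
  have eqs: "gA rho i1 x1 = gA rho i1 0" "gB rho i2 x2 = gB rho i2 1" using g me le1 le2 by linarith+
  have "x1 = 0" using gA_inj[OF i1 _ _ eqs(1)] x1' by simp
  moreover have "x2 = 1" using gB_inj[OF i2 _ _ eqs(2)] x2' by simp
  ultimately show ?thesis using vert_eq[OF i1] i2e by simp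
qed

lemma phi_inj: assumes "y \<in> phi rho d w1" "y \<in> phi rho d w2" shows "w1 = w2"
proof -
  obtain i1 x1 where i1: "i1 \<in> idx" and x1: "0 \<le> x1" "x1 \<le> 1" "w1 = pt x1 i1"
    and br1: "(x1 \<le> d i1 \<and> y = pt (gA rho i1 x1) (nxt i1)) \<or> (d i1 \<le> x1 \<and> y = pt (gB rho i1 x1) (nxt (nxt i1)))"
    using step_desc[OF assms(1)] by blast
  obtain i2 x2 where i2: "i2 \<in> idx" and x2: "0 \<le> x2" "x2 \<le> 1" "w2 = pt x2 i2"
    and br2: "(x2 \<le> d i2 \<and> y = pt (gA rho i2 x2) (nxt i2)) \<or> (d i2 \<le> x2 \<and> y = pt (gB rho i2 x2) (nxt (nxt i2)))"
    using step_desc[OF assms(2)] by blast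
  show ?thesis
  proof (cases "x1 \<le> d i1 \<and> y = pt (gA rho i1 x1) (nxt i1)")
    case A1: True
    show ?thesis
    proof (cases "x2 \<le> d i2 \<and> y = pt (gA rho i2 x2) (nxt i2)")
      case A2: True
      have x1': "x1 < 1" using A1 dp[OF i1] by linarith
      have r: "0 < gA rho i1 x1" "gA rho i1 x1 < 1" using gA_range[OF i1 x1(1) x1'] by auto
      have ee: "pt (gA rho i1 x1) (nxt i1) = pt (gA rho i2 x2) (nxt i2)" using A1 A2 by simp
      have "nxt i2 = nxt i1" "gA rho i2 x2 = gA rho i1 x1"
        using pt_eq[OF nxt_idx[OF i2] nxt_idx[OF i1] r ee] by auto
      then have "i2 = i1" "gA rho i1 x2 = gA rho i1 x1" using nxt_inj i1 i2 by auto
      then show ?thesis using gA_inj[OF i1] x1 x2 by auto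
    next
      case False
      then have B2: "d i2 \<le> x2" "y = pt (gB rho i2 x2) (nxt (nxt i2))" using br2 by auto
      have "pt x1 i1 = pt x2 i2" using AB_meet[OF i1 i2 x1(1) _ B2(1) x2(2)] A1 B2 by simp
      then show ?thesis using x1 x2 by simp
    qed
  next
    case False
    then have B1: "d i1 \<le> x1" "y = pt (gB rho i1 x1) (nxt (nxt i1))" using br1 by auto
    show ?thesis
    proof (cases "x2 \<le> d i2 \<and> y = pt (gA rho i2 x2) (nxt i2)")
      case A2: True
      have "pt x2 i2 = pt x1 i1" using AB_meet[OF i2 i1 x2(1) _ B1(1) x1(2)] A2 B1 by simp
      then show ?thesis using x1 x2 by simp
    next
      case False
      then have B2: "d i2 \<le> x2" "y = pt (gB rho i2 x2) (nxt (nxt i2))" using br2 by auto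
      have x1': "0 < x1" using B1 dp[OF i1] by linarith
      have r: "0 < gB rho i1 x1" "gB rho i1 x1 < 1" using gB_range[OF i1 x1' x1(2)] by auto
      have ee: "pt (gB rho i1 x1) (nxt (nxt i1)) = pt (gB rho i2 x2) (nxt (nxt i2))" using B1 B2 by simp
      have "nxt (nxt i2) = nxt (nxt i1)" "gB rho i2 x2 = gB rho i1 x1"
        using pt_eq[OF nxt_idx[OF nxt_idx[OF i2]] nxt_idx[OF nxt_idx[OF i1]] r ee] by auto
      then have "i2 = i1" "gB rho i1 x2 = gB rho i1 x1" using nxt_inj i1 i2 nxt_idx by metis+
      then show ?thesis using gB_inj[OF i1] x1 x2 by auto
    qed
  qed
qed
end

locale chain_setting = setting +
  assumes inf1: "infinite {z. preimage rho d z (dpt d 1)}"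
    and fin2: "finite {z. preimage rho d z (dpt d 2)}"
    and fin3: "finite {z. preimage rho d z (dpt d 3)}"
begin

definition "psi y = (SOME w. y \<in> phi rho d w)"
definition "c n = (psi ^^ n) (dpt d 1)"

lemma c0: "c 0 = dpt d 1" by (simp add: c_def)
lemma cS: "c (Suc n) = psi (c n)" by (simp add: c_def)

lemma dpt1_A0: "dpt d 1 \<in> A0"
proof -
  have "dpt d 1 \<in> Aface 1" unfolding dpt_def using dp[of 1] by (intro pt_Aface) auto
  then show ?thesis unfolding A0_def by auto
qed

lemma fwd_traj: assumes "w \<in> A0" shows "\<exists>s. trajectory rho d s \<and> s 0 = w"
proof -
  define s where "s = rec_nat w (\<lambda>_ p. SOME y. y \<in> phi rho d p)"
  have s0: "s 0 = w" and sS: "\<And>n. s (Suc n) = (SOME y. y \<in> phi rho d (s n))" by (simp_all add: s_def)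
  have A: "s n \<in> A0 \<and> s (Suc n) \<in> phi rho d (s n)" for n
  proof (induction n)
    case 0
    have "(SOME y. y \<in> phi rho d w) \<in> phi rho d w" using phi_nonempty[OF assms] by (rule someI_ex)
    then show ?case using s0 sS[of 0] assms by simp
  next
    case (Suc n)
    then have "s (Suc n) \<in> A0" using step_A0 by blast
    then show ?case using sS[of "Suc n"] phi_nonempty by (metis someI_ex)
  qed
  then show ?thesis using s0 unfolding trajectory_def by blast
qed

lemma pre_chain: assumes tr: "trajectory rho d s" and st: "s t = dpt d 1"
  shows "k \<le> t \<Longrightarrow> s (t - k) = c k \<and> (\<forall>k'<k. c k' \<in> phi rho d (c (Suc k')))"
proof (induction k)
  case 0 then show ?case using st c0 by simp
next
  case (Suc k)
  then have ih: "s (t - k) = c k" "\<forall>k'<k. c k' \<in> phi rho d (c (Suc k'))" by auto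
  have tk: "t - k = Suc (t - Suc k)" using Suc.prems by simp
  have m: "c k \<in> phi rho d (s (t - Suc k))" using tr ih(1) tk unfolding trajectory_def by metis
  then have m2: "c k \<in> phi rho d (c (Suc k))" unfolding cS psi_def by (rule someI[where P="\<lambda>w. c k \<in> phi rho d w"])
  have "s (t - Suc k) = c (Suc k)" using phi_inj[OF m m2] .
  then show ?case using ih(2) m2 less_Suc_eq by auto
qed

lemma linked: "c k \<in> phi rho d (c (Suc k))"
proof (rule ccontr)
  assume nl: "\<not> ?thesis"
  have "{z. preimage rho d z (dpt d 1)} \<subseteq> c ` {..k}"
  proof
    fix z assume "z \<in> {z. preimage rho d z (dpt d 1)}"
    then obtain s t where tr: "trajectory rho d s" and s0: "s 0 = z" and t: "t \<ge> 1" "s t = dpt d 1"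
      unfolding preimage_def by blast
    have pc: "s (t - t) = c t \<and> (\<forall>k'<t. c k' \<in> phi rho d (c (Suc k')))" using pre_chain[OF tr t(2), of t] by simp
    then have "t \<le> k" using nl by (metis not_le)
    then show "z \<in> c ` {..k}" using pc s0 by auto
  qed
  then show False using inf1 finite_subset by blast
qed

lemma chain_traj: "\<exists>s. trajectory rho d s \<and> (\<forall>n\<le>k. s n = c (k - n))"
proof -
  obtain w where w: "trajectory rho d w" "w 0 = c 0" using fwd_traj[OF dpt1_A0] c0 by auto
  define s where "s n = (if n \<le> k then c (k - n) else w (n - k))" for n
  have st: "s (Suc n) \<in> phi rho d (s n)" for n
  proof (cases "Suc n \<le> k")
    case True
    then have e: "k - n = Suc (k - Suc n)" by simp
    have "s (Suc n) = c (k - Suc n)" "s n = c (Suc (k - Suc n))" using True e unfolding s_def by simp_all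
    then show ?thesis using linked[of "k - Suc n"] by simp
  next
    case False
    show ?thesis
    proof (cases "n = k")
      case True
      have "s (Suc n) = w 1" "s n = w 0" using True w(2) unfolding s_def by simp_all
      moreover have "w 1 \<in> phi rho d (w 0)" using w(1) unfolding trajectory_def by (metis One_nat_def)
      ultimately show ?thesis by simp
    next
      case False
      then have "Suc n - k = Suc (n - k)" using \<open>\<not> Suc n \<le> k\<close> by simp
      then have "s (Suc n) = w (Suc (n - k))" "s n = w (n - k)" using \<open>\<not> Suc n \<le> k\<close> False unfolding s_def by simp_all
      moreover have "w (Suc (n - k)) \<in> phi rho d (w (n - k))" using w(1) unfolding trajectory_def by blast
      ultimately show ?thesis by simp
    qed
  qed
  have "\<forall>n\<le>k. s n = c (k - n)" unfolding s_def by simp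
  then show ?thesis using st unfolding trajectory_def by blast
qed

lemma chain_pre: assumes "a < k" shows "preimage rho d (c k) (c a)"
proof -
  obtain s where s: "trajectory rho d s" "\<forall>n\<le>k. s n = c (k - n)" using chain_traj by blast
  have "s 0 = c k" "s (k - a) = c a" "k - a \<ge> 1" using s(2) assms by auto
  then show ?thesis unfolding preimage_def using s(1) by blast
qed

lemma pre_sub: "{z. preimage rho d z (dpt d 1)} \<subseteq> range c"
proof
  fix z assume "z \<in> {z. preimage rho d z (dpt d 1)}"
  then obtain s t where tr: "trajectory rho d s" and s0: "s 0 = z" and t: "t \<ge> 1" "s t = dpt d 1"
    unfolding preimage_def by blast
  then show "z \<in> range c" using pre_chain[OF tr t(2), of t] by auto
qed

lemma c_inj: "inj c"
proof (rule ccontr)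
  assume "\<not> inj c"
  then obtain a b where ab: "c a = c b" "a \<noteq> b" unfolding inj_def by blast
  then obtain a b where ab: "c a = c b" "a < b" by (metis linorder_neqE_nat)
  have sh: "c (a + j) = c (b + j)" for j
  proof (induction j)
    case 0 then show ?case using ab by simp
  next
    case (Suc j)
    have "c (a + j) \<in> phi rho d (c (Suc (a + j)))" "c (a + j) \<in> phi rho d (c (Suc (b + j)))"
      using linked[of "a + j"] linked[of "b + j"] Suc by auto
    then show ?case using phi_inj by simp
  qed
  have "c t \<in> c ` {..<b}" for t
  proof (induction t rule: less_induct)
    case (less t)
    show ?case
    proof (cases "t < b")
      case False
      then have "c t = c (a + (t - b))" using sh[of "t - b"] by simp
      moreover have "a + (t - b) < t" using False ab by simp
      ultimately show ?thesis using less by simp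
    qed simp
  qed
  then have "range c \<subseteq> c ` {..<b}" by auto
  then have "finite (range c)" using finite_subset by blast
  then show False using pre_sub inf1 finite_subset by blast
qed

lemma P1_eq: "P1 rho d = range c"
proof
  show "P1 rho d \<subseteq> range c" unfolding P1_def using pre_sub c0 by (metis insert_subset rangeI)
  show "range c \<subseteq> P1 rho d"
  proof
    fix z assume "z \<in> range c"
    then obtain k where k: "z = c k" by blast
    show "z \<in> P1 rho d"
    proof (cases k)
      case 0 then show ?thesis using k c0 unfolding P1_def by simp
    next
      case (Suc k') then show ?thesis using k chain_pre[of 0 k] c0 unfolding P1_def by simp
    qed
  qed
qed

lemma not_dec23: "c n \<noteq> dpt d 2" "c n \<noteq> dpt d 3"
proof -
  have gen: "finite {z. preimage rho d z (c n)} \<Longrightarrow> False"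
  proof -
    assume f: "finite {z. preimage rho d z (c n)}"
    have "c ` {n<..} \<subseteq> {z. preimage rho d z (c n)}" using chain_pre by auto
    moreover have "infinite (c ` {n<..})" using c_inj infinite_Ioi by (simp add: finite_image_iff inj_on_subset)
    ultimately show False using f finite_subset by blast
  qed
  show "c n \<noteq> dpt d 2" using gen fin2 by auto
  show "c n \<noteq> dpt d 3" using gen fin3 by auto
qed

lemma not_dec1: "c (Suc n) \<noteq> dpt d 1" using c_inj c0 unfolding inj_def by (metis nat.distinct(1))

lemma not_dec: assumes "f \<in> idx" shows "c (Suc n) \<noteq> dpt d f"
  using idx_cases[OF assms] not_dec1 not_dec23 by auto

end

context chain_setting begin

definition "FXp n = (SOME p. fst p \<in> idx \<and> 0 < snd p \<and> snd p < 1 \<and> c n = pt (snd p) (fst p))"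
definition "F n = fst (FXp n)"
definition "X n = snd (FXp n)"

lemma FX: "F n \<in> idx" "0 < X n" "X n < 1" "c n = pt (X n) (F n)"
proof -
  obtain f x where "f \<in> idx" "0 < x" "x < 1" "c n = pt x f" using step_img[OF linked[of n]] by blast
  then have "\<exists>p. fst p \<in> idx \<and> 0 < snd p \<and> snd p < 1 \<and> c n = pt (snd p) (fst p)" by (intro exI[of _ "(f, x)"]) simp
  then have "fst (FXp n) \<in> idx \<and> 0 < snd (FXp n) \<and> snd (FXp n) < 1 \<and> c n = pt (snd (FXp n)) (fst (FXp n))"
    unfolding FXp_def by (rule someI_ex)
  then show "F n \<in> idx" "0 < X n" "X n < 1" "c n = pt (X n) (F n)" unfolding F_def X_def by auto
qed

lemma FX_uniq: assumes "c t = pt x f" "f \<in> idx" "0 < x" "x < 1" shows "F t = f" "X t = x"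
proof -
  have e: "pt (X t) (F t) = pt x f" using FX(4)[of t] assms(1) by simp
  show "F t = f" using pt_eq(1)[OF assms(2) FX(1) FX(2) FX(3) e] by simp
  show "X t = x" using pt_eq[OF assms(2) FX(1) FX(2) FX(3) e] by simp
qed

lemma F0: "F 0 = 1" "X 0 = d 1"
  using FX_uniq[of 0 "d 1" 1] c0 dp[of 1] unfolding dpt_def by auto

lemma c_face: "c t \<in> Aface i \<Longrightarrow> i \<in> idx \<Longrightarrow> i = F t"
  using pt_face[OF _ FX(1) FX(2) FX(3)] FX(4) by metis

lemma branch: "(X (Suc n) < d (F (Suc n)) \<and> F n = nxt (F (Suc n)) \<and> X n = gA rho (F (Suc n)) (X (Suc n))) \<or>
   (d (F (Suc n)) < X (Suc n) \<and> F n = nxt (nxt (F (Suc n))) \<and> X n = gB rho (F (Suc n)) (X (Suc n)))"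
proof -
  let ?f = "F (Suc n)" and ?x = "X (Suc n)"
  have f: "?f \<in> idx" and x: "0 < ?x" "?x < 1" and cs: "c (Suc n) = pt ?x ?f" using FX by auto
  have ne: "?x \<noteq> d ?f" using not_dec[OF f, of n] cs unfolding dpt_def by auto
  have l: "c n \<in> phi rho d (pt ?x ?f)" using linked[of n] cs by simp
  show ?thesis
  proof (cases "?x < d ?f")
    case True
    have e: "c n = pt (gA rho ?f ?x) (nxt ?f)" using phiA[OF f x(1) True l] .
    have r: "0 < gA rho ?f ?x" "gA rho ?f ?x < 1" using gA_range[OF f _ x(2)] x by auto
    show ?thesis using FX_uniq[OF e nxt_idx[OF f] r] True by simp
  next
    case False
    then have lt: "d ?f < ?x" using ne by simp
    have e: "c n = pt (gB rho ?f ?x) (nxt (nxt ?f))" using phiB[OF f lt x(2) l] .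
    have r: "0 < gB rho ?f ?x" "gB rho ?f ?x < 1" using gB_range[OF f x(1)] x(2) by auto
    show ?thesis using FX_uniq[OF e nxt_idx[OF nxt_idx[OF f]] r] lt by simp
  qed
qed

lemma c_eq: "c a = c b \<Longrightarrow> a = b" using c_inj unfolding inj_def by blast

lemma FX_eq: "F a = F b \<Longrightarrow> X a = X b \<Longrightarrow> a = b"
  using FX(4)[of a] FX(4)[of b] c_eq by metis

end

context chain_setting begin

definition "CC = Max (cA ` idx \<union> cB ` idx)"

lemma idx_fin: "finite idx" by (simp add: idx_def)
lemma idx_ne: "idx \<noteq> {}" by (simp add: idx_def)

lemma CC_ge: "i \<in> idx \<Longrightarrow> cA i \<le> CC" "i \<in> idx \<Longrightarrow> cB i \<le> CC"
  unfolding CC_def using idx_fin by (auto intro: Max_ge)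

lemma CC_pos: "0 < CC" using CC_ge(1)[of 1] cA_props(1)[of 1] by simp

lemma CC_lt1: "CC < 1"
proof -
  have "CC \<in> cA ` idx \<union> cB ` idx" unfolding CC_def using idx_fin idx_ne by (intro Max_in) auto
  then show ?thesis using cA_props(2) cB_props(2) by auto
qed

definition "free f a b \<longleftrightarrow> (\<forall>t. F t = f \<longrightarrow> \<not> (a < X t \<and> X t < b))"
definition "gapL n a \<longleftrightarrow> a < X n \<and> free (F n) a (X n)"
definition "gapR n b \<longleftrightarrow> X n < b \<and> free (F n) (X n) b"
definition "Gap n l \<longleftrightarrow> 0 < l \<and> (gapL n (X n - l) \<or> gapR n (X n + l))"
definition "EE = {0, 1, d 1, d 2, d 3}"
definition "TT = {n. \<exists>e\<in>EE. gapL n e \<or> gapR n e}"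

lemma d_EE: "f \<in> idx \<Longrightarrow> d f \<in> EE" using idx_cases[of f] by (auto simp: EE_def)

lemma pred_A: assumes "F t = f" "0 < X t" "X t < d f"
  shows "\<exists>t'. t = Suc t' \<and> F t' = nxt f \<and> X t' = gA rho f (X t)"
proof (cases t)
  case 0 then show ?thesis using assms F0 by simp
next
  case (Suc t')
  then show ?thesis using branch[of t'] assms by auto
qed

lemma pred_B: assumes "F t = f" "d f < X t" "X t < 1"
  shows "\<exists>t'. t = Suc t' \<and> F t' = nxt (nxt f) \<and> X t' = gB rho f (X t)"
proof (cases t)
  case 0 then show ?thesis using assms F0 by simp
next
  case (Suc t')
  then show ?thesis using branch[of t'] assms by auto
qed


lemma A_R: assumes f: "f \<in> idx" and br: "x' < d f" "F n = nxt f" "X n = gA rho f x'" and x'0: "0 < x'"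
  and fr: "free (F n) (X n) (X n + l)" and l: "0 < l"
  shows "free f (max 0 (x' - l / CC)) x'"
  unfolding free_def
proof (intro allI impI notI)
  fix t assume Ft: "F t = f" and it: "max 0 (x' - l / CC) < X t \<and> X t < x'"
  then have xt: "0 < X t" "X t < d f" "x' - X t < l / CC" using br by auto
  obtain t' where t': "F t' = nxt f" "X t' = gA rho f (X t)" using pred_A[OF Ft xt(1,2)] by blast
  have x1: "x' \<le> 1" using br dp[OF f] by linarith
  have gt: "X n < X t'" using gA_mono[OF f _ x1, of "X t"] it br t' by simp
  have "\<bar>gA rho f (X t) - gA rho f x'\<bar> \<le> cA f * \<bar>X t - x'\<bar>"
    using gA_lip[OF f, of "X t" x'] xt br x'0 by simp
  also have "\<dots> \<le> CC * \<bar>X t - x'\<bar>" using CC_ge[OF f] by (simp add: mult_right_mono)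
  also have "\<dots> < CC * (l / CC)" using xt it CC_pos by (intro mult_strict_left_mono) auto
  also have "\<dots> = l" using CC_pos by simp
  finally have "X t' < X n + l" using t' br by simp
  then show False using fr gt t' br unfolding free_def by auto
qed

lemma A_L: assumes f: "f \<in> idx" and br: "x' < d f" "F n = nxt f" "X n = gA rho f x'" and x'0: "0 < x'"
  and fr: "free (F n) (X n - l) (X n)" and l: "0 < l"
  shows "free f x' (min (d f) (x' + l / CC))"
  unfolding free_def
proof (intro allI impI notI)
  fix t assume Ft: "F t = f" and it: "x' < X t \<and> X t < min (d f) (x' + l / CC)"
  then have xt: "0 < X t" "X t < d f" "X t - x' < l / CC" using x'0 by auto
  obtain t' where t': "F t' = nxt f" "X t' = gA rho f (X t)" using pred_A[OF Ft xt(1,2)] by blast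
  have x1: "X t \<le> 1" using xt dp[OF f] by linarith
  have lt: "X t' < X n" using gA_mono[OF f _ x1, of x'] it br t' by simp
  have "\<bar>gA rho f (X t) - gA rho f x'\<bar> \<le> cA f * \<bar>X t - x'\<bar>"
    using gA_lip[OF f, of "X t" x'] xt br x'0 by simp
  also have "\<dots> \<le> CC * \<bar>X t - x'\<bar>" using CC_ge[OF f] by (simp add: mult_right_mono)
  also have "\<dots> < CC * (l / CC)" using xt it CC_pos by (intro mult_strict_left_mono) auto
  also have "\<dots> = l" using CC_pos by simp
  finally have "X n - l < X t'" using t' br by simp
  then show False using fr lt t' br unfolding free_def by auto
qed

lemma B_R: assumes f: "f \<in> idx" and br: "d f < x'" "F n = nxt (nxt f)" "X n = gB rho f x'" and x'1: "x' < 1"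
  and fr: "free (F n) (X n) (X n + l)" and l: "0 < l"
  shows "free f (max (d f) (x' - l / CC)) x'"
  unfolding free_def
proof (intro allI impI notI)
  fix t assume Ft: "F t = f" and it: "max (d f) (x' - l / CC) < X t \<and> X t < x'"
  then have xt: "d f < X t" "X t < 1" "x' - X t < l / CC" using x'1 by auto
  obtain t' where t': "F t' = nxt (nxt f)" "X t' = gB rho f (X t)" using pred_B[OF Ft xt(1,2)] by blast
  have x0: "0 \<le> X t" using xt dp[OF f] by linarith
  have gt: "X n < X t'" using gB_mono[OF f _ x0, of x'] it br t' by simp
  have "\<bar>gB rho f (X t) - gB rho f x'\<bar> \<le> cB f * \<bar>X t - x'\<bar>"
    using gB_lip[OF f, of "X t" x'] xt br x'1 by simp
  also have "\<dots> \<le> CC * \<bar>X t - x'\<bar>" using CC_ge[OF f] by (simp add: mult_right_mono)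
  also have "\<dots> < CC * (l / CC)" using xt it CC_pos by (intro mult_strict_left_mono) auto
  also have "\<dots> = l" using CC_pos by simp
  finally have "X t' < X n + l" using t' br by simp
  then show False using fr gt t' br unfolding free_def by auto
qed

lemma B_L: assumes f: "f \<in> idx" and br: "d f < x'" "F n = nxt (nxt f)" "X n = gB rho f x'" and x'1: "x' < 1"
  and fr: "free (F n) (X n - l) (X n)" and l: "0 < l"
  shows "free f x' (min 1 (x' + l / CC))"
  unfolding free_def
proof (intro allI impI notI)
  fix t assume Ft: "F t = f" and it: "x' < X t \<and> X t < min 1 (x' + l / CC)"
  then have xt: "d f < X t" "X t < 1" "X t - x' < l / CC" using br by auto
  obtain t' where t': "F t' = nxt (nxt f)" "X t' = gB rho f (X t)" using pred_B[OF Ft xt(1,2)] by blast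
  have x0: "0 \<le> x'" using br dp[OF f] by linarith
  have lt: "X t' < X n" using gB_mono[OF f _ x0, of "X t"] it br t' by simp
  have "\<bar>gB rho f (X t) - gB rho f x'\<bar> \<le> cB f * \<bar>X t - x'\<bar>"
    using gB_lip[OF f, of "X t" x'] xt br x'1 by simp
  also have "\<dots> \<le> CC * \<bar>X t - x'\<bar>" using CC_ge[OF f] by (simp add: mult_right_mono)
  also have "\<dots> < CC * (l / CC)" using xt it CC_pos by (intro mult_strict_left_mono) auto
  also have "\<dots> = l" using CC_pos by simp
  finally have "X n - l < X t'" using t' br by simp
  then show False using fr lt t' br unfolding free_def by auto
qed

lemma step: assumes G: "Gap n l"
  shows "Suc n \<in> TT \<or> (Gap (Suc n) (l / CC) \<and> l / CC < 1)"
proof -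
  let ?f = "F (Suc n)" and ?x = "X (Suc n)"
  have f: "?f \<in> idx" and x: "0 < ?x" "?x < 1" using FX by auto
  have l: "0 < l" using G unfolding Gap_def by simp
  have lc: "0 < l / CC" using l CC_pos by simp
  have "0 \<in> EE" "1 \<in> EE" "d ?f \<in> EE" using d_EE[OF f] by (auto simp: EE_def)
  note E = this
  show ?thesis
  proof (cases "?x < d ?f \<and> F n = nxt ?f \<and> X n = gA rho ?f ?x")
    case A: True
    show ?thesis
    proof (cases "gapR n (X n + l)")
      case True
      then have fr: "free (F n) (X n) (X n + l)" unfolding gapR_def by simp
      have nf: "free ?f (max 0 (?x - l / CC)) ?x" using A_R[OF f _ _ _ x(1) fr l] A by simp
      show ?thesis
      proof (cases "?x - l / CC \<le> 0")
        case True
        then have "gapL (Suc n) 0" using nf x unfolding gapL_def by simp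
        then show ?thesis using E unfolding TT_def by blast
      next
        case False
        then have "gapL (Suc n) (?x - l / CC)" using nf lc unfolding gapL_def by simp
        then show ?thesis using lc False x unfolding Gap_def by simp
      qed
    next
      case False
      then have fr: "free (F n) (X n - l) (X n)" using G unfolding Gap_def gapL_def by simp
      have nf: "free ?f ?x (min (d ?f) (?x + l / CC))" using A_L[OF f _ _ _ x(1) fr l] A by simp
      show ?thesis
      proof (cases "d ?f \<le> ?x + l / CC")
        case True
        then have "gapR (Suc n) (d ?f)" using nf A unfolding gapR_def by simp
        then show ?thesis using E unfolding TT_def by blast
      next
        case False
        then have "gapR (Suc n) (?x + l / CC)" using nf lc unfolding gapR_def by simp
        moreover have "l / CC < 1" using False x dp[OF f] by linarith
        ultimately show ?thesis using lc unfolding Gap_def by simp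
      qed
    qed
  next
    case nA: False
    then have B: "d ?f < ?x" "F n = nxt (nxt ?f)" "X n = gB rho ?f ?x" using branch[of n] by auto
    show ?thesis
    proof (cases "gapR n (X n + l)")
      case True
      then have fr: "free (F n) (X n) (X n + l)" unfolding gapR_def by simp
      have nf: "free ?f (max (d ?f) (?x - l / CC)) ?x" using B_R[OF f B x(2) fr l] .
      show ?thesis
      proof (cases "?x - l / CC \<le> d ?f")
        case True
        then have "gapL (Suc n) (d ?f)" using nf B unfolding gapL_def by simp
        then show ?thesis using E unfolding TT_def by blast
      next
        case False
        then have "gapL (Suc n) (?x - l / CC)" using nf lc unfolding gapL_def by simp
        moreover have "l / CC < 1" using False x dp[OF f] by linarith
        ultimately show ?thesis using lc unfolding Gap_def by simp
      qed
    next
      case False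
      then have fr: "free (F n) (X n - l) (X n)" using G unfolding Gap_def gapL_def by simp
      have nf: "free ?f ?x (min 1 (?x + l / CC))" using B_L[OF f B x(2) fr l] .
      show ?thesis
      proof (cases "1 \<le> ?x + l / CC")
        case True
        then have "gapR (Suc n) 1" using nf x unfolding gapR_def by simp
        then show ?thesis using E unfolding TT_def by blast
      next
        case False
        then have "gapR (Suc n) (?x + l / CC)" using nf lc unfolding gapR_def by simp
        moreover have "l / CC < 1" using False x by linarith
        ultimately show ?thesis using lc unfolding Gap_def by simp
      qed
    qed
  qed
qed

lemma TT_Gap: "n \<in> TT \<Longrightarrow> \<exists>l. Gap n l"
proof -
  assume "n \<in> TT"
  then obtain e where "gapL n e \<or> gapR n e" unfolding TT_def by blast
  then show ?thesis
  proof
    assume g: "gapL n e"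
    then have "Gap n (X n - e)" unfolding Gap_def gapL_def by simp
    then show ?thesis by blast
  next
    assume g: "gapR n e"
    then have "Gap n (e - X n)" unfolding Gap_def gapR_def by simp
    then show ?thesis by blast
  qed
qed

lemma step_ex: "Gap n l \<Longrightarrow> \<exists>l'. Gap (Suc n) l'"
  using step TT_Gap by blast

lemma subsing_fin: "(\<And>a b. a \<in> S \<Longrightarrow> b \<in> S \<Longrightarrow> a = b) \<Longrightarrow> finite S"
proof (cases "S = {}")
  case False
  assume h: "\<And>a b. a \<in> S \<Longrightarrow> b \<in> S \<Longrightarrow> a = b"
  obtain a where "a \<in> S" using False by blast
  then have "S \<subseteq> {a}" using h by blast
  then show ?thesis using finite_subset by blast
qed simp

lemma uniqL: assumes "F a = f" "F b = f" "gapL a e" "gapL b e" shows "a = b"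
proof -
  have "\<not> X a < X b"
  proof
    assume "X a < X b"
    then show False using assms unfolding gapL_def free_def by auto
  qed
  moreover have "\<not> X b < X a"
  proof
    assume "X b < X a"
    then show False using assms unfolding gapL_def free_def by auto
  qed
  ultimately show ?thesis using FX_eq assms by force
qed

lemma uniqR: assumes "F a = f" "F b = f" "gapR a e" "gapR b e" shows "a = b"
proof -
  have "\<not> X a < X b"
  proof
    assume "X a < X b"
    then show False using assms unfolding gapR_def free_def by auto
  qed
  moreover have "\<not> X b < X a"
  proof
    assume "X b < X a"
    then show False using assms unfolding gapR_def free_def by auto
  qed
  ultimately show ?thesis using FX_eq assms by force
qed

lemma TT_fin: "finite TT"
proof -
  have "TT \<subseteq> (\<Union>e\<in>EE. \<Union>f\<in>idx. {n. F n = f \<and> gapL n e} \<union> {n. F n = f \<and> gapR n e})"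
    unfolding TT_def using FX(1) by blast
  moreover have "finite (\<Union>e\<in>EE. \<Union>f\<in>idx. {n. F n = f \<and> gapL n e} \<union> {n. F n = f \<and> gapR n e})"
  proof (intro finite_UN_I finite_UnI)
    show "finite EE" unfolding EE_def by simp
    show "finite idx" by (rule idx_fin)
    fix e f
    show "finite {n. F n = f \<and> gapL n e}" by (rule subsing_fin) (use uniqL in blast)
    show "finite {n. F n = f \<and> gapR n e}" by (rule subsing_fin) (use uniqR in blast)
  qed
  ultimately show ?thesis using finite_subset by blast
qed

lemma no_gap: "\<not> Gap m l"
proof
  assume G: "Gap m l"
  have all: "\<exists>l. Gap (m + k) l" for k
  proof (induction k)
    case 0 then show ?case using G by auto
  next
    case (Suc k) then show ?case using step_ex by auto
  qed
  define N where "N = Suc (Max (insert m TT))"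
  have fin: "finite (insert m TT)" using TT_fin by simp
  have Nm: "m \<le> N" unfolding N_def using Max_ge[OF fin, of m] by simp
  have NT: "n \<notin> TT" if "N \<le> n" for n
  proof
    assume "n \<in> TT"
    then have "n \<le> Max (insert m TT)" using Max_ge[OF fin] by simp
    then show False using that unfolding N_def by simp
  qed
  obtain lN where GN: "Gap N lN" using all[of "N - m"] Nm by auto
  have lN: "0 < lN" using GN unfolding Gap_def by simp
  have ind: "Gap (N + k) (lN / CC ^ k) \<and> lN / CC ^ (Suc k) < 1" for k
  proof (induction k)
    case 0
    have "Suc N \<notin> TT" using NT by simp
    then show ?case using step[OF GN] GN by simp
  next
    case (Suc k)
    have G1: "Gap (N + Suc k) (lN / CC ^ Suc k)"
    proof -
      have "Suc (N + k) \<notin> TT" using NT by simp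
      then have "Gap (Suc (N + k)) (lN / CC ^ k / CC)" using step[of "N + k"] Suc.IH by blast
      then show ?thesis by (simp add: divide_divide_eq_left mult.commute)
    qed
    moreover have "Suc (N + Suc k) \<notin> TT" using NT by simp
    then have "lN / CC ^ Suc k / CC < 1" using step[OF G1] by blast
    ultimately show ?case by (simp add: divide_divide_eq_left mult.commute)
  qed
  obtain k where k: "CC ^ k < lN" using real_arch_pow_inv[OF lN CC_lt1] by blast
  have "CC ^ Suc k \<le> CC ^ k" using CC_pos CC_lt1 by (simp add: power_decreasing)
  then have "CC ^ Suc k < lN" using k by simp
  then have "1 < lN / CC ^ Suc k" using CC_pos by simp
  then show False using ind[of k] by simp
qed
end

lemma dec_seq:
  fixes g :: "nat \<Rightarrow> real"
  assumes H: "\<forall>e>0. \<exists>t. P t \<and> a < g t \<and> g t < a + e"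
  shows "\<exists>\<tau>. (\<forall>k. P (\<tau> k)) \<and> (\<forall>k. g (\<tau> (Suc k)) < g (\<tau> k)) \<and> (\<lambda>k. g (\<tau> k)) \<longlonglongrightarrow> a"
proof -
  define \<tau> where "\<tau> = rec_nat (SOME t. P t \<and> a < g t \<and> g t < a + 1)
      (\<lambda>k p. SOME t. P t \<and> a < g t \<and> g t < a + min (g p - a) (1 / real (k + 2)))"
  have t0: "\<tau> 0 = (SOME t. P t \<and> a < g t \<and> g t < a + 1)" by (simp add: \<tau>_def)
  have tS: "\<tau> (Suc k) = (SOME t. P t \<and> a < g t \<and> g t < a + min (g (\<tau> k) - a) (1 / real (k + 2)))" for k
    by (simp add: \<tau>_def)
  have inv: "P (\<tau> k) \<and> a < g (\<tau> k) \<and> g (\<tau> k) < a + 1 / real (k + 1)" for k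
  proof (induction k)
    case 0
    have "\<exists>t. P t \<and> a < g t \<and> g t < a + 1" using H by simp
    then have "P (\<tau> 0) \<and> a < g (\<tau> 0) \<and> g (\<tau> 0) < a + 1" unfolding t0 by (rule someI_ex)
    then show ?case by simp
  next
    case (Suc k)
    have "min (g (\<tau> k) - a) (1 / real (k + 2)) > 0" using Suc.IH by simp
    then have "\<exists>t. P t \<and> a < g t \<and> g t < a + min (g (\<tau> k) - a) (1 / real (k + 2))" using H by blast
    then have "P (\<tau> (Suc k)) \<and> a < g (\<tau> (Suc k)) \<and> g (\<tau> (Suc k)) < a + min (g (\<tau> k) - a) (1 / real (k + 2))"
      unfolding tS by (rule someI_ex)
    then have "g (\<tau> (Suc k)) < a + 1 / real (k + 2)" by linarith
    then show ?case using \<open>P (\<tau> (Suc k)) \<and> a < g (\<tau> (Suc k)) \<and> _\<close> by (simp add: add.commute)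
  qed
  have dec: "g (\<tau> (Suc k)) < g (\<tau> k)" for k
  proof -
    have "min (g (\<tau> k) - a) (1 / real (k + 2)) > 0" using inv[of k] by simp
    then have "\<exists>t. P t \<and> a < g t \<and> g t < a + min (g (\<tau> k) - a) (1 / real (k + 2))" using H by blast
    then have "P (\<tau> (Suc k)) \<and> a < g (\<tau> (Suc k)) \<and> g (\<tau> (Suc k)) < a + min (g (\<tau> k) - a) (1 / real (k + 2))"
      unfolding tS by (rule someI_ex)
    moreover have "min (g (\<tau> k) - a) (1 / real (k + 2)) \<le> g (\<tau> k) - a" by (rule min.cobounded1)
    ultimately show ?thesis by linarith
  qed
  have lim: "(\<lambda>k. g (\<tau> k)) \<longlonglongrightarrow> a"
  proof (rule tendsto_sandwich[of "\<lambda>_. a" _ _ "\<lambda>k. a + inverse (real (Suc k))"])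
    show "\<forall>\<^sub>F k in sequentially. a \<le> g (\<tau> k)" using inv by (simp add: less_imp_le)
    show "\<forall>\<^sub>F k in sequentially. g (\<tau> k) \<le> a + inverse (real (Suc k))"
      using inv by (simp add: less_imp_le inverse_eq_divide add.commute)
    show "(\<lambda>_. a) \<longlonglongrightarrow> a" by simp
    have "(\<lambda>k. a + inverse (real (Suc k))) \<longlonglongrightarrow> a + 0"
      by (intro tendsto_add tendsto_const LIMSEQ_inverse_real_of_nat)
    then show "(\<lambda>k. a + inverse (real (Suc k))) \<longlonglongrightarrow> a" by simp
  qed
  show ?thesis using inv dec lim by blast
qed

lemma inc_seq:
  fixes g :: "nat \<Rightarrow> real"
  assumes H: "\<forall>e>0. \<exists>t. P t \<and> a - e < g t \<and> g t < a"
  shows "\<exists>\<tau>. (\<forall>k. P (\<tau> k)) \<and> (\<forall>k. g (\<tau> k) < g (\<tau> (Suc k))) \<and> (\<lambda>k. g (\<tau> k)) \<longlonglongrightarrow> a"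
proof -
  have "\<forall>e>0. \<exists>t. P t \<and> - a < - g t \<and> - g t < - a + e"
  proof (intro allI impI)
    fix e :: real assume "e > 0"
    then obtain t where "P t" "a - e < g t" "g t < a" using H by blast
    then show "\<exists>t. P t \<and> - a < - g t \<and> - g t < - a + e" by (intro exI[of _ t]) auto
  qed
  from dec_seq[OF this] obtain \<tau> where t: "\<forall>k. P (\<tau> k)" "\<forall>k. - g (\<tau> (Suc k)) < - g (\<tau> k)"
    "(\<lambda>k. - g (\<tau> k)) \<longlonglongrightarrow> - a" by blast
  have "(\<lambda>k. g (\<tau> k)) \<longlonglongrightarrow> a" using tendsto_minus_cancel[OF t(3)] .
  then show ?thesis using t(1,2) by auto
qed

context chain_setting begin

lemma dens_R: "e > 0 \<Longrightarrow> \<exists>t. F t = F m \<and> X m < X t \<and> X t < X m + e"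
proof (rule ccontr)
  assume e: "e > 0" and "\<not> (\<exists>t. F t = F m \<and> X m < X t \<and> X t < X m + e)"
  then have "free (F m) (X m) (X m + e)" unfolding free_def by blast
  then have "Gap m e" using e unfolding Gap_def gapR_def by simp
  then show False using no_gap by blast
qed

lemma dens_L: "e > 0 \<Longrightarrow> \<exists>t. F t = F m \<and> X m - e < X t \<and> X t < X m"
proof (rule ccontr)
  assume e: "e > 0" and "\<not> (\<exists>t. F t = F m \<and> X m - e < X t \<and> X t < X m)"
  then have "free (F m) (X m - e) (X m)" unfolding free_def by blast
  then have "Gap m e" using e unfolding Gap_def gapL_def by simp
  then show False using no_gap by blast
qed

lemma c_in: assumes "F t = i" shows "c t \<in> P1 rho d \<inter> Aface i \<and> piF i (c t) = X t"
proof -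
  have a: "c t \<in> P1 rho d" using P1_eq by simp
  have b: "c t \<in> Aface i" using FX[of t] pt_Aface[of "F t" "X t"] assms by simp
  have "piF i (c t) = X t" using FX[of t] assms by simp
  then show ?thesis using a b by simp
qed

lemma main: assumes u: "u \<in> P1 rho d" and i: "i \<in> idx" and ui: "u \<in> Aface i"
  shows "R_limit (P1 rho d) i u \<and> L_limit (P1 rho d) i u"
proof -
  obtain m where m: "u = c m" using u P1_eq by auto
  have im: "i = F m" using c_face ui m i by simp
  have pu: "piF i u = X m" using c_in[of m i] im m by simp
  obtain \<tau> where t: "\<forall>k. F (\<tau> k) = F m" "\<forall>k. X (\<tau> (Suc k)) < X (\<tau> k)" "(\<lambda>k. X (\<tau> k)) \<longlonglongrightarrow> X m"
    using dec_seq[of "\<lambda>t. F t = F m" "X m" X] dens_R by blast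
  have R: "R_limit (P1 rho d) i u"
    unfolding R_limit_def
  proof (intro conjI ui exI[of _ "\<lambda>k. c (\<tau> k)"] allI)
    fix k
    show "c (\<tau> k) \<in> P1 rho d \<inter> Aface i" using c_in[of "\<tau> k" i] t(1) im by simp
    show "piF i (c (\<tau> (Suc k))) < piF i (c (\<tau> k))"
      using c_in[of "\<tau> k" i] c_in[of "\<tau> (Suc k)" i] t(1,2) im by simp
  next
    have "piF i (c (\<tau> n)) = X (\<tau> n)" for n using c_in[of "\<tau> n" i] t(1) im by simp
    then show "(\<lambda>n. piF i (c (\<tau> n))) \<longlonglongrightarrow> piF i u" using t(3) pu by simp
  qed
  obtain \<sigma> where s: "\<forall>k. F (\<sigma> k) = F m" "\<forall>k. X (\<sigma> k) < X (\<sigma> (Suc k))" "(\<lambda>k. X (\<sigma> k)) \<longlonglongrightarrow> X m"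
    using inc_seq[of "\<lambda>t. F t = F m" "X m" X] dens_L by blast
  have L: "L_limit (P1 rho d) i u"
    unfolding L_limit_def
  proof (intro conjI ui exI[of _ "\<lambda>k. c (\<sigma> k)"] allI)
    fix k
    show "c (\<sigma> k) \<in> P1 rho d \<inter> Aface i" using c_in[of "\<sigma> k" i] s(1) im by simp
    show "piF i (c (\<sigma> (Suc k))) > piF i (c (\<sigma> k))"
      using c_in[of "\<sigma> k" i] c_in[of "\<sigma> (Suc k)" i] s(1,2) im by simp
  next
    have "piF i (c (\<sigma> n)) = X (\<sigma> n)" for n using c_in[of "\<sigma> n" i] s(1) im by simp
    then show "(\<lambda>n. piF i (c (\<sigma> n))) \<longlonglongrightarrow> piF i u" using s(3) pu by simp
  qed
  show ?thesis using R L by simp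
qed

end

theorem lemma5p4:
  fixes rho d :: "nat \<Rightarrow> real"
  assumes rho_range: "\<forall>i\<in>idx. 0 < rho i \<and> rho i < 1"
    and rho_sum: "rho 1 + rho 2 + rho 3 > 1"
    and rho_pair: "\<forall>i\<in>idx. \<forall>j\<in>idx. i \<noteq> j \<longrightarrow> rho i + rho j \<le> 1"
    and d_range: "\<forall>i\<in>idx. 0 < d i \<and> d i < 1"
    and inf1: "infinite {z. preimage rho d z (dpt d 1)}"
    and fin2: "finite {z. preimage rho d z (dpt d 2)}"
    and fin3: "finite {z. preimage rho d z (dpt d 3)}"
  shows "\<forall>u\<in>P1 rho d. \<forall>i\<in>idx. u \<in> Aface i \<longrightarrow>
           R_limit (P1 rho d) i u \<and> L_limit (P1 rho d) i u"
proof -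
  interpret chain_setting rho d
    using assms by unfold_locales auto
  show ?thesis using main by blast
qed

end
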